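(* Let $c_k\in(0,1)$, $l_k>0$ decreasing to $0$, $I_k$ the open interval of length $l_k$ centered at $c_k$, and assume (A1) and (A3) below. Let $f\in C([0,1])$, let $\mu_k=\frac{1}{|I_k|}f(x)\,dx|_{I_k}$ (with $dx$ Lebesgue measure restricted to $[0,1]$), $\mu_{\mathcal{A}_n}=\frac{1}{\#\mathcal{A}_n}\sum_{k\in\mathcal{A}_n}\mu_k$ and $V_n=\bigcup_{k\in\mathcal{A}_n}I_k$. Then $\mu_{\mathcal{A}_n}(V_n)=\int_0^1 f(x)\phi(x)\,dx+o(1)$ as $n\to\infty$.
   Context: Notation: $\mathcal{A}_n=\{n,\dots,2n-1\}$, $\mathcal{A}_{n,q}=\mathcal{A}_n\cup\mathcal{A}_{2n}\cup\cdots\cup\mathcal{A}_{2^qn}$. (A1) There is $\phi\in L^1([0,1],dx)$, $\phi>0$ a.e., with $\frac{1}{\#\mathcal{A}_n}\sum_{k\in\mathcal{A}_n}g(c_k)\to\int_0^1 g\phi\,dx$ for every $g\in C([0,1])$; $\phi$ in the claim is this function. (A3) There are integers $q(n)\to\infty$ such that for every $\varepsilon>0$, for all large $n$ and all $i\ne j$ in $\mathcal{A}_{n,q(n)}$, $\frac{l_i+l_j}{2|c_i-c_j|}<\varepsilon$. *)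

theory Defs
  imports "HOL-Analysis.Analysis"
begin

definition blockA :: "nat \<Rightarrow> nat set" where
  "blockA n = {n..<2*n}"

definition blockAq :: "nat \<Rightarrow> nat \<Rightarrow> nat set" where
  "blockAq n q = (\<Union>m\<in>{0..q}. blockA (2^m * n))"

definition intI :: "(nat \<Rightarrow> real) \<Rightarrow> (nat \<Rightarrow> real) \<Rightarrow> nat \<Rightarrow> real set" where
  "intI c l k = {c k - l k / 2 <..< c k + l k / 2}"

definition muk :: "(nat \<Rightarrow> real) \<Rightarrow> (nat \<Rightarrow> real) \<Rightarrow> (real \<Rightarrow> real) \<Rightarrow> nat \<Rightarrow> real set \<Rightarrow> real" where
  "muk c l f k S = (1 / l k) * (LINT x : (S \<inter> intI c l k \<inter> {0..1}) | lborel. f x)"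

definition muA :: "(nat \<Rightarrow> real) \<Rightarrow> (nat \<Rightarrow> real) \<Rightarrow> (real \<Rightarrow> real) \<Rightarrow> nat \<Rightarrow> real set \<Rightarrow> real" where
  "muA c l f n S = (1 / real (card (blockA n))) * (\<Sum>k\<in>blockA n. muk c l f k S)"

definition setV :: "(nat \<Rightarrow> real) \<Rightarrow> (nat \<Rightarrow> real) \<Rightarrow> nat \<Rightarrow> real set" where
  "setV c l n = (\<Union>k\<in>blockA n. intI c l k)"

end

theory Submission
  imports Defs
begin

definition hbump :: "real \<Rightarrow> real \<Rightarrow> real" where
  "hbump d x = max 0 (min 1 (2 - min x (1 - x) / d))"

lemma hd_cont: "continuous_on A (hbump d)"
  unfolding hbump_def divide_inverse by (intro continuous_intros)

lemma hd_meas[measurable]: "hbump d \<in> borel_measurable borel"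
  by (intro borel_measurable_continuous_onI hd_cont)

lemma hd_bounds: "0 \<le> hbump d x" "hbump d x \<le> 1"
  unfolding hbump_def by auto

lemma hd_one: assumes "d > 0" "min x (1 - x) \<le> d" shows "hbump d x = 1"
proof -
  have "min x (1 - x) / d \<le> 1" using assms by (simp add: divide_le_eq)
  thus ?thesis unfolding hbump_def by auto
qed

lemma hd_small:
  fixes \<phi> :: "real \<Rightarrow> real"
  assumes int: "set_integrable lborel {0..1} \<phi>" and e: "e > 0"
  shows "\<exists>d>0. (LINT x : {0..1} | lborel. hbump d x * \<phi> x) < e"
proof -
  define s where "s = (\<lambda>m x. indicator {0..1} x *\<^sub>R (hbump (1 / real (Suc m)) x * \<phi> x))"
  let ?s = s
  have phim: "(\<lambda>x. indicator {0..1} x *\<^sub>R \<phi> x) \<in> borel_measurable lborel"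
    using int unfolding set_integrable_def by auto
  have lim: "(\<lambda>m. integral\<^sup>L lborel (?s m)) \<longlonglongrightarrow> integral\<^sup>L lborel (\<lambda>x::real. 0::real)"
  proof (rule integral_dominated_convergence[of "\<lambda>x. 0::real" lborel ?s "\<lambda>x. norm (indicator {0..1} x *\<^sub>R \<phi> x)"])
    show "(\<lambda>x. 0::real) \<in> borel_measurable lborel" by simp
    show "?s m \<in> borel_measurable lborel" for m
    proof -
      have "?s m = (\<lambda>x. hbump (1 / real (Suc m)) x * (indicator {0..1} x *\<^sub>R \<phi> x))"
        by (auto simp: s_def indicator_def fun_eq_iff)
      moreover have "(\<lambda>x. hbump (1 / real (Suc m)) x * (indicator {0..1} x *\<^sub>R \<phi> x)) \<in> borel_measurable lborel"
        using phim by measurable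
      ultimately show ?thesis by simp
    qed
    show "integrable lborel (\<lambda>x. norm (indicator {0..1} x *\<^sub>R \<phi> x))"
      using int unfolding set_integrable_def by (rule integrable_norm)
    show "AE x in lborel. norm (?s m x) \<le> norm (indicator {0..1} x *\<^sub>R \<phi> x)" for m
    proof (rule AE_I2)
      fix x
      have "\<bar>hbump (1 / real (Suc m)) x * \<phi> x\<bar> \<le> \<bar>\<phi> x\<bar>"
        using hd_bounds[of "1 / real (Suc m)" x] by (simp add: abs_mult mult_left_le_one_le)
      thus "norm (?s m x) \<le> norm (indicator {0..1} x *\<^sub>R \<phi> x)"
        by (auto simp: s_def indicator_def)
    qed
    show "AE x in lborel. (\<lambda>m. ?s m x) \<longlonglongrightarrow> 0"
      using AE_lborel_singleton[of 0] AE_lborel_singleton[of 1]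
    proof eventually_elim
      case (elim x)
      show ?case
      proof (cases "x \<in> {0..1}")
        case False thus ?thesis by (simp add: s_def)
      next
        case True
        define t where "t = min x (1 - x)"
        have t: "t > 0" using True elim unfolding t_def by auto
        obtain N :: nat where N: "2 / t < N" using reals_Archimedean2 by blast
        have "eventually (\<lambda>m. ?s m x = 0) sequentially"
        proof (rule eventually_sequentiallyI[of N])
          fix m assume "N \<le> m"
          hence "2 / t < Suc m" using N by linarith
          hence "2 < t * Suc m" using t by (simp add: divide_less_eq mult.commute)
          hence "hbump (1 / real (Suc m)) x = 0" unfolding hbump_def t_def[symmetric] by simp
          thus "?s m x = 0" by (simp add: s_def)
        qed
        thus ?thesis by (rule tendsto_eventually)
      qed
    qed
  qed
  hence "(\<lambda>m. LINT x : {0..1} | lborel. hbump (1 / real (Suc m)) x * \<phi> x) \<longlonglongrightarrow> 0"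
    by (simp add: s_def set_lebesgue_integral_def)
  from order_tendstoD(2)[OF this e] obtain N where
    "\<forall>m\<ge>N. (LINT x : {0..1} | lborel. hbump (1 / real (Suc m)) x * \<phi> x) < e"
    by (auto simp: eventually_sequentially)
  hence "(LINT x : {0..1} | lborel. hbump (1 / real (Suc N)) x * \<phi> x) < e" by auto
  thus ?thesis by (intro exI[of _ "1 / real (Suc N)"]) auto
qed


lemma local_bound:
  fixes f :: "real \<Rightarrow> real"
  assumes fc: "continuous_on {0..1} f" and Mb: "\<forall>x\<in>{0..1}. \<bar>f x\<bar> \<le> M"
    and uc: "\<forall>x\<in>{0..1}. \<forall>y\<in>{0..1}. \<bar>x - y\<bar> < \<eta> \<longrightarrow> \<bar>f x - f y\<bar> \<le> \<epsilon>"
    and c: "c \<in> {0<..<1}" and L: "L > 0" "L < 2 * \<eta>" and eps: "\<epsilon> \<ge> 0"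
  shows "\<bar>(1 / L) * (LINT x : ({c - L/2<..<c + L/2} \<inter> {0..1}) | lborel. f x) - f c\<bar>
           \<le> \<epsilon> + (if 0 \<le> c - L/2 \<and> c + L/2 \<le> 1 then 0 else M)"
proof -
  define S where "S = {c - L/2<..<c + L/2} \<inter> {0..1}"
  define m where "m = measure lborel S"
  define I where "I = (LINT x : S | lborel. f x)"
  have Sm: "S \<in> sets lborel" unfolding S_def by auto
  have SI: "S \<subseteq> {c - L/2<..<c + L/2}" unfolding S_def by auto
  have m_le: "m \<le> L"
  proof -
    have "m \<le> measure lborel {c - L/2<..<c + L/2}"
      unfolding m_def using L by (intro measure_mono_fmeasurable[OF SI Sm]) (simp add: fmeasurable_def)
    thus ?thesis using L by simp
  qed
  have m_ge: "0 \<le> m" unfolding m_def by simp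
  have fin: "emeasure lborel S \<noteq> \<infinity>"
  proof -
    have "emeasure lborel S \<le> emeasure lborel {c - L/2<..<c + L/2}"
      by (rule emeasure_mono[OF SI]) auto
    thus ?thesis using L by (auto simp: top_unique)
  qed
  have int01: "set_integrable lborel {0..1} f"
    unfolding set_integrable_def by (rule borel_integrable_compact[OF compact_Icc fc])
  have intS: "set_integrable lborel S f"
    by (rule set_integrable_subset[OF int01 Sm]) (auto simp: S_def)
  have int01c: "set_integrable lborel {0..1::real} (\<lambda>_. f c)"
    unfolding set_integrable_def by (intro borel_integrable_compact continuous_intros) auto
  have intSc: "set_integrable lborel S (\<lambda>_. f c)"
    by (rule set_integrable_subset[OF int01c Sm]) (auto simp: S_def)
  have int01e: "set_integrable lborel {0..1::real} (\<lambda>_. \<epsilon>)"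
    unfolding set_integrable_def by (intro borel_integrable_compact continuous_intros) auto
  have intSe: "set_integrable lborel S (\<lambda>_. \<epsilon>)"
    by (rule set_integrable_subset[OF int01e Sm]) (auto simp: S_def)
  have intD: "set_integrable lborel S (\<lambda>x. f x - f c)"
    using intS intSc by (rule set_integral_diff(1))
  have eqD: "(LINT x : S | lborel. f x - f c) = I - f c * m"
    unfolding I_def m_def using set_integral_diff(2)[OF intS intSc] set_integral_const[OF Sm fin, of "f c"]
    by simp
  have "\<bar>LINT x : S | lborel. f x - f c\<bar> \<le> (LINT x : S | lborel. \<bar>f x - f c\<bar>)"
    using set_integral_norm_bound[OF intD] by simp
  also have "\<dots> \<le> (LINT x : S | lborel. \<epsilon>)"
  proof (rule set_integral_mono[OF set_integrable_abs[OF intD] intSe])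
    fix x assume "x \<in> S"
    hence "x \<in> {0..1}" "\<bar>x - c\<bar> < \<eta>" using L unfolding S_def by auto
    thus "\<bar>f x - f c\<bar> \<le> \<epsilon>" using uc c by auto
  qed
  also have "\<dots> = \<epsilon> * m" unfolding m_def using set_integral_const[OF Sm fin, of \<epsilon>] by simp
  finally have bD: "\<bar>I - f c * m\<bar> \<le> \<epsilon> * m" using eqD by simp
  have split: "(1 / L) * I - f c = (I - f c * m) / L + f c * (m / L - 1)"
    using L by (simp add: field_simps)
  have b1: "\<bar>(I - f c * m) / L\<bar> \<le> \<epsilon>"
  proof -
    have "\<bar>(I - f c * m) / L\<bar> = \<bar>I - f c * m\<bar> / L" using L by simp
    also have "\<dots> \<le> \<epsilon> * m / L" using bD L by (simp add: divide_right_mono)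
    also have "\<dots> \<le> \<epsilon>" using m_le L eps by (simp add: divide_le_eq mult_left_mono)
    finally show ?thesis .
  qed
  show ?thesis
  proof (cases "0 \<le> c - L/2 \<and> c + L/2 \<le> 1")
    case True
    hence "S = {c - L/2<..<c + L/2}" unfolding S_def by auto
    hence "m = L" unfolding m_def using L by simp
    hence "(1 / L) * I - f c = (I - f c * m) / L" using split L by simp
    thus ?thesis using b1 True unfolding S_def I_def by simp
  next
    case False
    have fcM: "\<bar>f c\<bar> \<le> M" using Mb c by auto
    have mL: "\<bar>m / L - 1\<bar> \<le> 1" using m_le m_ge L by (simp add: abs_le_iff divide_le_eq)
    have "\<bar>f c * (m / L - 1)\<bar> = \<bar>f c\<bar> * \<bar>m / L - 1\<bar>" by (simp add: abs_mult)
    also have "\<dots> \<le> \<bar>f c\<bar> * 1" using mL by (intro mult_left_mono) auto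
    also have "\<dots> \<le> M" using fcM by simp
    finally have "\<bar>f c * (m / L - 1)\<bar> \<le> M" .
    hence "\<bar>(1 / L) * I - f c\<bar> \<le> \<epsilon> + M" using split b1 by linarith
    thus ?thesis using False unfolding S_def I_def by (simp only: if_False)
  qed
qed

theorem lemma4p5:
  fixes c l :: "nat \<Rightarrow> real" and f \<phi> :: "real \<Rightarrow> real"
  assumes c_range: "\<And>k. c k \<in> {0<..<1}"
    and l_pos: "\<And>k. l k > 0"
    and l_dec: "decseq l"
    and l_lim: "l \<longlonglongrightarrow> 0"
    and A1_int: "set_integrable lborel {0..1} \<phi>"
    and A1_pos: "AE x in lborel. x \<in> {0..1} \<longrightarrow> \<phi> x > 0"
    and A1_lim: "\<And>g. continuous_on {0..1} g \<Longrightarrow>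
        (\<lambda>n. (1 / real (card (blockA n))) * (\<Sum>k\<in>blockA n. g (c k)))
          \<longlonglongrightarrow> (LINT x : {0..1} | lborel. g x * \<phi> x)"
    and A3: "\<exists>q :: nat \<Rightarrow> nat. filterlim q at_top sequentially \<and>
        (\<forall>\<epsilon>>0. \<forall>\<^sub>F n in sequentially. \<forall>i\<in>blockAq n (q n). \<forall>j\<in>blockAq n (q n).
            i \<noteq> j \<longrightarrow> l i + l j < 2 * \<epsilon> * \<bar>c i - c j\<bar>)"
    and f_cont: "continuous_on {0..1} f"
  shows "(\<lambda>n. muA c l f n (setV c l n) - (LINT x : {0..1} | lborel. f x * \<phi> x))
           \<longlonglongrightarrow> 0"
proof -
  define I where "I = (LINT x : {0..1} | lborel. f x * \<phi> x)"
  define G where "G k = (1 / l k) * (LINT x : (intI c l k \<inter> {0..1}) | lborel. f x)" for k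
  define NN where "NN n = real (card (blockA n))" for n
  define D where "D n = (1 / NN n) * (\<Sum>k\<in>blockA n. G k - f (c k))" for n
  define Af where "Af n = (1 / NN n) * (\<Sum>k\<in>blockA n. f (c k))" for n
  have NN: "NN n = real n" for n unfolding NN_def blockA_def by simp
  have muk_eq: "muk c l f k (setV c l n) = G k" if "k \<in> blockA n" for k n
  proof -
    have "setV c l n \<inter> intI c l k \<inter> {0..1} = intI c l k \<inter> {0..1}"
      using that unfolding setV_def by auto
    thus ?thesis unfolding muk_def G_def by simp
  qed
  have eq: "muA c l f n (setV c l n) - I = D n + (Af n - I)" for n
  proof -
    have "muA c l f n (setV c l n) = (1 / NN n) * (\<Sum>k\<in>blockA n. G k)"
      unfolding muA_def NN_def using muk_eq by (simp cong: sum.cong)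
    also have "\<dots> = D n + Af n"
      unfolding D_def Af_def by (simp add: sum_subtractf ring_distribs)
    finally show ?thesis by simp
  qed
  have Af_lim: "(\<lambda>n. Af n - I) \<longlonglongrightarrow> 0"
    unfolding Af_def NN_def I_def by (rule LIM_zero[OF A1_lim[OF f_cont]])
  obtain M where M0: "M \<ge> 0" and Mb: "\<forall>x\<in>{0..1}. \<bar>f x\<bar> \<le> M"
  proof -
    have "bounded (f ` {0..1})"
      by (rule compact_imp_bounded[OF compact_continuous_image[OF f_cont compact_Icc]])
    then obtain a where "\<forall>y\<in>f ` {0..1}. norm y \<le> a" unfolding bounded_iff by blast
    hence "\<forall>x\<in>{0..1}. \<bar>f x\<bar> \<le> max a 0" by auto
    thus ?thesis using that[of "max a 0"] by auto
  qed
  have D_lim: "D \<longlonglongrightarrow> 0"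
  proof (rule LIMSEQ_I)
    fix r :: real assume r: "0 < r"
    define \<epsilon> where "\<epsilon> = r / (2 * M + 2)"
    have eps: "\<epsilon> > 0" unfolding \<epsilon>_def using r M0 by simp
    have eps_r: "\<epsilon> * (1 + 2 * M) < r"
    proof -
      have "\<epsilon> * (2 * M + 2) = r" unfolding \<epsilon>_def using M0 by simp
      thus ?thesis using eps by (simp add: algebra_simps)
    qed
    obtain \<eta> where eta: "\<eta> > 0" and uc0: "\<forall>x\<in>{0..1}. \<forall>x'\<in>{0..1}. dist x' x < \<eta> \<longrightarrow> dist (f x') (f x) < \<epsilon>"
      using compact_uniformly_continuous[OF f_cont compact_Icc] eps
      unfolding uniformly_continuous_on_def by metis
    have uc: "\<forall>x\<in>{0..1}. \<forall>y\<in>{0..1}. \<bar>x - y\<bar> < \<eta> \<longrightarrow> \<bar>f x - f y\<bar> \<le> \<epsilon>"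
      using uc0 by (auto simp: dist_real_def less_imp_le)
    obtain \<delta> where dl: "\<delta> > 0" and hs: "(LINT x : {0..1} | lborel. hbump \<delta> x * \<phi> x) < \<epsilon>"
      using hd_small[OF A1_int eps] by blast
    have h2: "(LINT x : {0..1} | lborel. hbump \<delta> x * \<phi> x) < 2 * \<epsilon>" using hs eps by linarith
    have ev1: "\<forall>\<^sub>F n in sequentially. (1 / real (card (blockA n))) * (\<Sum>k\<in>blockA n. hbump \<delta> (c k)) < 2 * \<epsilon>"
      by (rule order_tendstoD(2)[OF A1_lim[OF hd_cont] h2])
    have ev2: "\<forall>\<^sub>F n in sequentially. l n < min (2 * \<eta>) (2 * \<delta>)"
      using order_tendstoD(2)[OF l_lim, of "min (2 * \<eta>) (2 * \<delta>)"] eta dl by simp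
    obtain N where N: "\<And>n. n \<ge> N \<Longrightarrow> (1 / real (card (blockA n))) * (\<Sum>k\<in>blockA n. hbump \<delta> (c k)) < 2 * \<epsilon>
        \<and> l n < min (2 * \<eta>) (2 * \<delta>)"
      using eventually_conj[OF ev1 ev2] unfolding eventually_sequentially by blast
    show "\<exists>no. \<forall>n\<ge>no. norm (D n - 0) < r"
    proof (intro exI allI impI)
      fix n assume n: "n \<ge> max N 1"
      have Npos: "NN n > 0" using n NN by simp
      have kb: "\<bar>G k - f (c k)\<bar> \<le> \<epsilon> + M * hbump \<delta> (c k)" if k: "k \<in> blockA n" for k
      proof -
        have "l k \<le> l n" using k l_dec unfolding blockA_def by (auto intro: decseqD)
        hence lk: "l k < 2 * \<eta>" "l k < 2 * \<delta>" using N[of n] n by auto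
        have lb: "\<bar>G k - f (c k)\<bar> \<le> \<epsilon> + (if 0 \<le> c k - l k/2 \<and> c k + l k/2 \<le> 1 then 0 else M)"
          unfolding G_def intI_def
          by (rule local_bound[OF f_cont Mb uc c_range l_pos lk(1) less_imp_le[OF eps]])
        show ?thesis
        proof (cases "0 \<le> c k - l k/2 \<and> c k + l k/2 \<le> 1")
          case True
          have "0 \<le> M * hbump \<delta> (c k)" using M0 hd_bounds(1)[of \<delta> "c k"] by simp
          thus ?thesis using lb True by simp
        next
          case False
          hence "min (c k) (1 - c k) \<le> \<delta>" using lk by auto
          hence "hbump \<delta> (c k) = 1" by (rule hd_one[OF dl])
          moreover have "\<bar>G k - f (c k)\<bar> \<le> \<epsilon> + M" using lb False by (simp only: if_False)
          ultimately show ?thesis by simp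
        qed
      qed
      have "\<bar>D n\<bar> = (1 / NN n) * \<bar>\<Sum>k\<in>blockA n. G k - f (c k)\<bar>"
        unfolding D_def using Npos by (simp add: abs_mult)
      also have "\<dots> \<le> (1 / NN n) * (\<Sum>k\<in>blockA n. \<bar>G k - f (c k)\<bar>)"
        using Npos by (intro mult_left_mono sum_abs) auto
      also have "\<dots> \<le> (1 / NN n) * (\<Sum>k\<in>blockA n. \<epsilon> + M * hbump \<delta> (c k))"
        using Npos by (intro mult_left_mono sum_mono kb) auto
      also have "\<dots> = \<epsilon> + M * ((1 / NN n) * (\<Sum>k\<in>blockA n. hbump \<delta> (c k)))"
        using Npos by (simp add: sum.distrib sum_distrib_left[symmetric] NN_def field_simps)
      also have "\<dots> \<le> \<epsilon> + M * (2 * \<epsilon>)"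
        using N[of n] n M0 unfolding NN_def by (intro add_left_mono mult_left_mono) auto
      also have "\<dots> < r" using eps_r by (simp add: algebra_simps)
      finally show "norm (D n - 0) < r" by simp
    qed
  qed
  have "(\<lambda>n. D n + (Af n - I)) \<longlonglongrightarrow> 0 + 0" by (intro tendsto_add D_lim Af_lim)
  hence "(\<lambda>n. muA c l f n (setV c l n) - I) \<longlonglongrightarrow> 0" unfolding eq by simp
  thus ?thesis unfolding I_def .
qed

end
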